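(* There is a (unique) action of the group $W(P)$ on the set $R(P)=\prod_{i=0}^p\prod_{j=1}^{k_i}K^{l_{i,j}}$ in which each generator $\sigma_{c_t}$ ($t\in\mathcal T(P)$) acts by the map $\sigma(t)$ and each generator $\sigma_{c(i,j,s)}$ acts by $\sigma(i,j,s)$ defined below; that is, these maps satisfy all relations of $W(P)$ (in particular $\sigma(t)^2=\mathrm{id}$ and $(\sigma(t)\sigma(t'))^{m}=\mathrm{id}$ with $m=2,3,4,6$ when $-\langle c_t,c_{t'}\rangle=0,1,2,3$, and the analogous braid relations involving $\sigma(i,j,s)$).
   Context: $K$ is a field of characteristic $0$. Combinatorial data: integer $p\ge0$; positive integers $k_i$ ($0\le i\le p$) and $l_{i,j}$ ($1\le j\le k_i$); nonnegative integers $e_i(j,j')$, symmetric in $j,j'$, with $e_i(j,j)=0$ and $e_i(j,j')\ge1$ for $j\neq j'$ (in the paper $e_i(j,j')=-\mathrm{wt}_{c_i}(w_{i,j}-w_{i,j'})$ is the degree of the difference of exponential factors at the singular point $c_i$, with $c_0=\infty$). $\mathcal T(P)=\prod_{i=0}^p\{1,\dots,k_i\}$. $Q(P)$ is the free $\mathbb Z$-module on $\mathcal C=\{c_t\}_{t\in\mathcal T(P)}\cup\{c(i,j,s)\mid 1\le s\le l_{i,j}-1\}$ with symmetric form $\langle c_t,c_{t'}\rangle=-\sum_{i=0}^pe_i(t_i,t'_i)-(p-1)+\#\{i\mid t_i=t'_i\}$, $\langle c_t,c(i,j,s)\rangle=-1$ if $t_i=j,s=1$ and $0$ otherwise, $\langle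 c(i,j,s),c(i',j',s')\rangle=2$ if equal, $-1$ if $(i,j)=(i',j')$ and $|s-s'|=1$, $0$ otherwise. $W(P)$ is the group generated by the reflections $\sigma_c(\alpha)=\alpha-\langle c,\alpha\rangle c$, $c\in\mathcal C$. Maps on $R(P)$ (elements $\nu=(\nu_{i,j,s})$): for $t\in\mathcal T(P)$ put $\nu(t)=\sum_{i=0}^p\nu_{i,t_i,1}$ and $\sigma(t)\nu=\tilde\nu$ with, for $i\ge1$: $\tilde\nu_{i,t_i,1}=\nu_{i,t_i,1}$, and $\tilde\nu_{i,j,s}=\nu_{i,j,s}-(e_i(j,t_i)+1)(1-\nu(t))$ for all other $(j,s)$; for $i=0$: $\tilde\nu_{0,t_0,1}=\nu_{0,t_0,1}+2(1-\nu(t))$, and $\tilde\nu_{0,j,s}=\nu_{0,j,s}-(e_0(j,t_0)-1)(1-\nu(t))$ for all other $(j,s)$. For $1\le s\le l_{i,j}-1$, $\sigma(i,j,s)$ swaps $\nu_{i,j,s}$ and $\nu_{i,j,s+1}$. *)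

theory Defs
  imports "HOL-Analysis.Analysis" "HOL-Library.FuncSet"
begin

definition valid_data :: "nat \<Rightarrow> (nat \<Rightarrow> nat) \<Rightarrow> (nat \<Rightarrow> nat \<Rightarrow> nat) \<Rightarrow> (nat \<Rightarrow> nat \<Rightarrow> nat \<Rightarrow> nat) \<Rightarrow> bool" where
  "valid_data p k l e \<longleftrightarrow>
     (\<forall>i\<le>p. 1 \<le> k i) \<and>
     (\<forall>i\<le>p. \<forall>j\<in>{1..k i}. 1 \<le> l i j) \<and>
     (\<forall>i\<le>p. \<forall>j\<in>{1..k i}. \<forall>j'\<in>{1..k i}. e i j j' = e i j' j) \<and>
     (\<forall>i\<le>p. \<forall>j\<in>{1..k i}. e i j j = 0) \<and>
     (\<forall>i\<le>p. \<forall>j\<in>{1..k i}. \<forall>j'\<in>{1..k i}. j \<noteq> j' \<longrightarrow> 1 \<le> e i j j')"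

text \<open>T(P) = prod_{i=0}^p {1..k_i}, as extensional functions (value 0 for i > p).\<close>
definition TP :: "nat \<Rightarrow> (nat \<Rightarrow> nat) \<Rightarrow> (nat \<Rightarrow> nat) set" where
  "TP p k = {t. (\<forall>i\<le>p. 1 \<le> t i \<and> t i \<le> k i) \<and> (\<forall>i>p. t i = 0)}"

text \<open>Names of basis elements of Q(P): CT t is c_t, CR i j s is c(i,j,s).\<close>
datatype gen = CT "nat \<Rightarrow> nat" | CR nat nat nat

definition CP :: "nat \<Rightarrow> (nat \<Rightarrow> nat) \<Rightarrow> (nat \<Rightarrow> nat \<Rightarrow> nat) \<Rightarrow> gen set" where
  "CP p k l = CT ` TP p k \<union>
     {CR i j s | i j s. i \<le> p \<and> 1 \<le> j \<and> j \<le> k i \<and> 1 \<le> s \<and> s \<le> l i j - 1}"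

fun pairing :: "nat \<Rightarrow> (nat \<Rightarrow> nat \<Rightarrow> nat \<Rightarrow> nat) \<Rightarrow> gen \<Rightarrow> gen \<Rightarrow> int" where
  "pairing p e (CT t) (CT t') =
     - (\<Sum>i\<le>p. int (e i (t i) (t' i))) - (int p - 1) + int (card {i. i \<le> p \<and> t i = t' i})"
| "pairing p e (CT t) (CR i j s) = (if t i = j \<and> s = 1 then -1 else 0)"
| "pairing p e (CR i j s) (CT t) = (if t i = j \<and> s = 1 then -1 else 0)"
| "pairing p e (CR i j s) (CR i' j' s') =
     (if (i, j, s) = (i', j', s') then 2
      else if (i, j) = (i', j') \<and> (s = s' + 1 \<or> s' = s + 1) then -1 else 0)"

text \<open>Q(P): the free Z-module on CP, as integer-valued functions supported on CP.\<close>
definition QP :: "nat \<Rightarrow> (nat \<Rightarrow> nat) \<Rightarrow> (nat \<Rightarrow> nat \<Rightarrow> nat) \<Rightarrow> (gen \<Rightarrow> int) set" where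
  "QP p k l = {\<alpha>. \<forall>d. d \<notin> CP p k l \<longrightarrow> \<alpha> d = 0}"

definition pairQ :: "nat \<Rightarrow> (nat \<Rightarrow> nat) \<Rightarrow> (nat \<Rightarrow> nat \<Rightarrow> nat) \<Rightarrow> (nat \<Rightarrow> nat \<Rightarrow> nat \<Rightarrow> nat)
     \<Rightarrow> gen \<Rightarrow> (gen \<Rightarrow> int) \<Rightarrow> int" where
  "pairQ p k l e c \<alpha> = (\<Sum>c'\<in>CP p k l. \<alpha> c' * pairing p e c c')"

definition reflQ :: "nat \<Rightarrow> (nat \<Rightarrow> nat) \<Rightarrow> (nat \<Rightarrow> nat \<Rightarrow> nat) \<Rightarrow> (nat \<Rightarrow> nat \<Rightarrow> nat \<Rightarrow> nat)
     \<Rightarrow> gen \<Rightarrow> (gen \<Rightarrow> int) \<Rightarrow> (gen \<Rightarrow> int)" where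
  "reflQ p k l e c \<alpha> = (\<lambda>d. \<alpha> d - pairQ p k l e c \<alpha> * (if d = c then 1 else 0))"

definition wordQ :: "nat \<Rightarrow> (nat \<Rightarrow> nat) \<Rightarrow> (nat \<Rightarrow> nat \<Rightarrow> nat) \<Rightarrow> (nat \<Rightarrow> nat \<Rightarrow> nat \<Rightarrow> nat)
     \<Rightarrow> gen list \<Rightarrow> (gen \<Rightarrow> int) \<Rightarrow> (gen \<Rightarrow> int)" where
  "wordQ p k l e ws = restrict (foldr (\<lambda>c f. reflQ p k l e c \<circ> f) ws id) (QP p k l)"

definition WP :: "nat \<Rightarrow> (nat \<Rightarrow> nat) \<Rightarrow> (nat \<Rightarrow> nat \<Rightarrow> nat) \<Rightarrow> (nat \<Rightarrow> nat \<Rightarrow> nat \<Rightarrow> nat)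
     \<Rightarrow> ((gen \<Rightarrow> int) \<Rightarrow> (gen \<Rightarrow> int)) set" where
  "WP p k l e = wordQ p k l e ` lists (CP p k l)"

definition vidx :: "nat \<Rightarrow> (nat \<Rightarrow> nat) \<Rightarrow> (nat \<Rightarrow> nat \<Rightarrow> nat) \<Rightarrow> nat \<Rightarrow> nat \<Rightarrow> nat \<Rightarrow> bool" where
  "vidx p k l i j s \<longleftrightarrow> i \<le> p \<and> 1 \<le> j \<and> j \<le> k i \<and> 1 \<le> s \<and> s \<le> l i j"

definition RP :: "nat \<Rightarrow> (nat \<Rightarrow> nat) \<Rightarrow> (nat \<Rightarrow> nat \<Rightarrow> nat) \<Rightarrow> (nat \<Rightarrow> nat \<Rightarrow> nat \<Rightarrow> 'k::field) set" where
  "RP p k l = {\<nu>. \<forall>i j s. \<not> vidx p k l i j s \<longrightarrow> \<nu> i j s = 0}"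

definition nu_t :: "nat \<Rightarrow> (nat \<Rightarrow> nat \<Rightarrow> nat \<Rightarrow> 'k::field) \<Rightarrow> (nat \<Rightarrow> nat) \<Rightarrow> 'k" where
  "nu_t p \<nu> t = (\<Sum>i\<le>p. \<nu> i (t i) 1)"

fun actR :: "nat \<Rightarrow> (nat \<Rightarrow> nat) \<Rightarrow> (nat \<Rightarrow> nat \<Rightarrow> nat) \<Rightarrow> (nat \<Rightarrow> nat \<Rightarrow> nat \<Rightarrow> nat)
     \<Rightarrow> gen \<Rightarrow> (nat \<Rightarrow> nat \<Rightarrow> nat \<Rightarrow> 'k::field) \<Rightarrow> (nat \<Rightarrow> nat \<Rightarrow> nat \<Rightarrow> 'k)" where
  "actR p k l e (CT t) \<nu> =
     (\<lambda>i j s. if vidx p k l i j s then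
        (if i = 0 then
           (if j = t 0 \<and> s = 1 then \<nu> i j s + 2 * (1 - nu_t p \<nu> t)
            else \<nu> i j s - (of_nat (e 0 j (t 0)) - 1) * (1 - nu_t p \<nu> t))
         else
           (if j = t i \<and> s = 1 then \<nu> i j s
            else \<nu> i j s - (of_nat (e i j (t i)) + 1) * (1 - nu_t p \<nu> t)))
      else \<nu> i j s)"
| "actR p k l e (CR i j s) \<nu> =
     (\<lambda>i' j' s'. if i' = i \<and> j' = j \<and> s' = s then \<nu> i j (s + 1)
                else if i' = i \<and> j' = j \<and> s' = s + 1 then \<nu> i j s
                else \<nu> i' j' s')"

definition wordR :: "nat \<Rightarrow> (nat \<Rightarrow> nat) \<Rightarrow> (nat \<Rightarrow> nat \<Rightarrow> nat) \<Rightarrow> (nat \<Rightarrow> nat \<Rightarrow> nat \<Rightarrow> nat)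
     \<Rightarrow> gen list \<Rightarrow> (nat \<Rightarrow> nat \<Rightarrow> nat \<Rightarrow> 'k::field) \<Rightarrow> (nat \<Rightarrow> nat \<Rightarrow> nat \<Rightarrow> 'k)" where
  "wordR p k l e ws = restrict (foldr (\<lambda>c f. actR p k l e c \<circ> f) ws id) (RP p k l)"

end

theory Submission imports Defs "Jordan_Normal_Form.Determinant" begin


section \<open>Abstract pseudo-reflection systems\<close>

locale prs =
  fixes act :: "'c \<Rightarrow> 'v \<Rightarrow> 'v" and Lam :: "'c \<Rightarrow> 'v \<Rightarrow> 'r::comm_ring_1"
    and V :: "'c \<Rightarrow> 'v" and comb :: "'v \<Rightarrow> 'r \<Rightarrow> 'v \<Rightarrow> 'v"
    and A :: "'c \<Rightarrow> 'c \<Rightarrow> 'r" and C :: "'c set"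
  assumes act_eq: "c \<in> C \<Longrightarrow> act c x = comb x (Lam c x) (V c)"
    and lam_eq: "c \<in> C \<Longrightarrow> d \<in> C \<Longrightarrow> Lam d (comb x a (V c)) = Lam d x - a * A c d"
    and comb_comm: "comb (comb x a u) b v = comb (comb x b v) a u"
    and comb_add: "comb (comb x a u) b u = comb x (a + b) u"
    and comb_0: "comb x 0 u = x"
    and A_diag: "c \<in> C \<Longrightarrow> A c c = 2"
    and A_sym: "c \<in> C \<Longrightarrow> d \<in> C \<Longrightarrow> A c d = A d c"
begin

lemma invol: "c \<in> C \<Longrightarrow> act c (act c x) = x"
proof -
  assume c: "c \<in> C"
  have "act c (act c x) = comb (comb x (Lam c x) (V c)) (Lam c x - Lam c x * 2) (V c)"
    using c by (simp add: act_eq lam_eq A_diag)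
  also have "\<dots> = x" by (simp add: comb_add comb_0)
  finally show ?thesis .
qed

lemma commute: "c \<in> C \<Longrightarrow> d \<in> C \<Longrightarrow> A c d = 0 \<Longrightarrow> act c (act d x) = act d (act c x)"
proof -
  assume c: "c \<in> C" and d: "d \<in> C" and z: "A c d = 0"
  have z': "A d c = 0" using z A_sym c d by simp
  show ?thesis using c d z z' by (simp add: act_eq lam_eq comb_comm)
qed

lemma braid: "c \<in> C \<Longrightarrow> d \<in> C \<Longrightarrow> A c d = -1 \<Longrightarrow>
   act c (act d (act c x)) = act d (act c (act d x))"
proof -
  assume c: "c \<in> C" and d: "d \<in> C" and z: "A c d = -1"
  have z': "A d c = -1" using z A_sym c d by simp
  define a where "a = Lam c x"
  define b where "b = Lam d x"
  have L: "act c (act d (act c x)) = comb (comb (comb x a (V c)) (b + a) (V d)) b (V c)"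
    using c d z z' A_diag[OF c] A_diag[OF d]
    by (simp add: act_eq lam_eq a_def b_def algebra_simps)
  have R: "act d (act c (act d x)) = comb (comb (comb x b (V d)) (a + b) (V c)) a (V d)"
    using c d z z' A_diag[OF c] A_diag[OF d]
    by (simp add: act_eq lam_eq a_def b_def algebra_simps)
  have "comb (comb (comb x a (V c)) (b + a) (V d)) b (V c) = comb (comb x (a+b) (V c)) (a+b) (V d)"
    by (metis add.commute comb_add comb_comm)
  moreover have "comb (comb (comb x b (V d)) (a + b) (V c)) a (V d) = comb (comb x (a+b) (V c)) (a+b) (V d)"
    by (metis add.commute comb_add comb_comm)
  ultimately show ?thesis using L R by simp
qed

end

definition ind :: "gen \<Rightarrow> gen \<Rightarrow> int" where "ind c = (\<lambda>d. if d = c then 1 else 0)"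

definition Qw where "Qw p k l e ws = foldr (\<lambda>c f. reflQ p k l e c \<circ> f) ws id"
definition Rw :: "nat \<Rightarrow> (nat \<Rightarrow> nat) \<Rightarrow> (nat \<Rightarrow> nat \<Rightarrow> nat) \<Rightarrow> (nat \<Rightarrow> nat \<Rightarrow> nat \<Rightarrow> nat)
     \<Rightarrow> gen list \<Rightarrow> (nat \<Rightarrow> nat \<Rightarrow> nat \<Rightarrow> 'k::field) \<Rightarrow> (nat \<Rightarrow> nat \<Rightarrow> nat \<Rightarrow> 'k)"
  where "Rw p k l e ws = foldr (\<lambda>c f. actR p k l e c \<circ> f) ws id"

lemma foldr_comp_gen: "foldr (\<lambda>c f. g c \<circ> f) ws x = foldr (\<lambda>c f. g c \<circ> f) ws id \<circ> x"
  by (induction ws) auto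

lemma Qw_simps[simp]: "Qw p k l e [] = id" "Qw p k l e (c # ws) = reflQ p k l e c \<circ> Qw p k l e ws"
  "Qw p k l e (ws @ us) = Qw p k l e ws \<circ> Qw p k l e us"
  by (auto simp: Qw_def) (subst foldr_comp_gen, simp)

lemma Rw_simps[simp]: "Rw p k l e [] = id" "Rw p k l e (c # ws) = actR p k l e c \<circ> Rw p k l e ws"
  "Rw p k l e (ws @ us) = Rw p k l e ws \<circ> Rw p k l e us"
  by (auto simp: Rw_def) (subst foldr_comp_gen, simp)

lemma finite_TP: "finite (TP p k)"
proof -
  have "TP p k \<subseteq> {f. \<forall>x. (x \<in> {..p} \<longrightarrow> f x \<in> {..sum k {..p}}) \<and> (x \<notin> {..p} \<longrightarrow> f x = 0)}"
  proof
    fix t assume "t \<in> TP p k"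
    then have "\<forall>i\<le>p. t i \<le> k i" "\<forall>i>p. t i = 0" by (auto simp: TP_def)
    moreover have "\<forall>i\<le>p. k i \<le> sum k {..p}" by (auto intro: member_le_sum)
    ultimately show "t \<in> {f. \<forall>x. (x \<in> {..p} \<longrightarrow> f x \<in> {..sum k {..p}}) \<and> (x \<notin> {..p} \<longrightarrow> f x = 0)}"
      by (auto intro: order_trans)
  qed
  then show ?thesis by (rule finite_subset) (rule finite_set_of_finite_funs, auto)
qed

lemma finite_CP: "finite (CP p k l)"
proof -
  have "{CR i j s | i j s. i \<le> p \<and> 1 \<le> j \<and> j \<le> k i \<and> 1 \<le> s \<and> s \<le> l i j - 1}
     \<subseteq> (\<lambda>(i,j,s). CR i j s) ` (SIGMA i:{..p}. SIGMA j:{..k i}. {..l i j})" by force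
  moreover have "finite (SIGMA i:{..p}. SIGMA j:{..k i}. {..l i j})" by auto
  ultimately show ?thesis unfolding CP_def using finite_TP
    by (meson finite_Un finite_imageI finite_subset)
qed



fun Lam :: "nat \<Rightarrow> gen \<Rightarrow> (nat \<Rightarrow> nat \<Rightarrow> nat \<Rightarrow> 'k::field) \<Rightarrow> 'k" where
  "Lam p (CT t) \<nu> = 1 - nu_t p \<nu> t"
| "Lam p (CR i j s) \<nu> = \<nu> i j s - \<nu> i j (s + 1)"

fun Vv :: "nat \<Rightarrow> (nat \<Rightarrow> nat) \<Rightarrow> (nat \<Rightarrow> nat \<Rightarrow> nat) \<Rightarrow> (nat \<Rightarrow> nat \<Rightarrow> nat \<Rightarrow> nat)
     \<Rightarrow> gen \<Rightarrow> (nat \<Rightarrow> nat \<Rightarrow> nat \<Rightarrow> 'k::field)" where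
  "Vv p k l e (CT t) = (\<lambda>i j s. if vidx p k l i j s then
        (if i = 0 then (if j = t 0 \<and> s = 1 then 2 else 1 - of_nat (e 0 j (t 0)))
         else (if j = t i \<and> s = 1 then 0 else - (of_nat (e i j (t i)) + 1))) else 0)"
| "Vv p k l e (CR i j s) = (\<lambda>i' j' s'. if i' = i \<and> j' = j \<and> s' = s + 1 then 1
        else if i' = i \<and> j' = j \<and> s' = s then -1 else 0)"

lemma actR_decomp: "actR p k l e c \<nu> = (\<lambda>i j s. \<nu> i j s + Lam p c \<nu> * Vv p k l e c i j s)"
proof (cases c)
  case (CT t)
  then show ?thesis by (auto simp: fun_eq_iff algebra_simps)
next
  case (CR i j s)
  then show ?thesis by (auto simp: fun_eq_iff algebra_simps)
qed

lemma sum_alt_sign: "(\<Sum>i\<le>p. (if i = 0 then 1 else -1 :: int)) = 1 - int p"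
  by (induction p) auto

lemma sum_ind_card: "(\<Sum>i\<le>(p::nat). (if P i then 1 else 0 :: int)) = int (card {i. i \<le> p \<and> P i})"
proof -
  have "(\<Sum>i\<le>p. (if P i then 1 else 0 :: int)) = (\<Sum>i\<in>{i\<in>{..p}. P i}. 1)"
    by (subst sum.inter_filter) auto
  also have "{i\<in>{..p}. P i} = {i. i \<le> p \<and> P i}" by auto
  finally show ?thesis by simp
qed

locale PD =
  fixes p :: nat and k :: "nat \<Rightarrow> nat" and l :: "nat \<Rightarrow> nat \<Rightarrow> nat" and e :: "nat \<Rightarrow> nat \<Rightarrow> nat \<Rightarrow> nat"
  assumes valid: "valid_data p k l e"
begin

lemma e_sym: "i \<le> p \<Longrightarrow> j \<in> {1..k i} \<Longrightarrow> j' \<in> {1..k i} \<Longrightarrow> e i j j' = e i j' j"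
  using valid by (auto simp: valid_data_def)
lemma e_diag: "i \<le> p \<Longrightarrow> j \<in> {1..k i} \<Longrightarrow> e i j j = 0"
  using valid by (auto simp: valid_data_def)
lemma l_pos: "i \<le> p \<Longrightarrow> j \<in> {1..k i} \<Longrightarrow> 1 \<le> l i j"
  using valid by (auto simp: valid_data_def)

lemma TP_D: "t \<in> TP p k \<Longrightarrow> i \<le> p \<Longrightarrow> t i \<in> {1..k i}"
  by (auto simp: TP_def)

lemma CR_in_CP: "CR i j s \<in> CP p k l \<longleftrightarrow> i \<le> p \<and> 1 \<le> j \<and> j \<le> k i \<and> 1 \<le> s \<and> s \<le> l i j - 1"
  by (auto simp: CP_def)
lemma CT_in_CP: "CT t \<in> CP p k l \<longleftrightarrow> t \<in> TP p k"
  by (auto simp: CP_def)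

lemma pairing_sym: "c \<in> CP p k l \<Longrightarrow> d \<in> CP p k l \<Longrightarrow> pairing p e c d = pairing p e d c"
proof (cases c; cases d)
  fix t t' assume c: "c \<in> CP p k l" "d \<in> CP p k l" "c = CT t" "d = CT t'"
  then have t: "t \<in> TP p k" "t' \<in> TP p k" by (auto simp: CT_in_CP)
  have "(\<Sum>i\<le>p. int (e i (t i) (t' i))) = (\<Sum>i\<le>p. int (e i (t' i) (t i)))"
    using e_sym TP_D t by (intro sum.cong) auto
  moreover have "{i. i \<le> p \<and> t i = t' i} = {i. i \<le> p \<and> t' i = t i}" by auto
  ultimately show ?thesis using c by simp
qed auto

lemma pairing_diag: "c \<in> CP p k l \<Longrightarrow> pairing p e c c = 2"
proof (cases c)
  case (CT t)
  assume "c \<in> CP p k l"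
  then have t: "t \<in> TP p k" using CT by (auto simp: CT_in_CP)
  have "(\<Sum>i\<le>p. int (e i (t i) (t i))) = 0" using e_diag TP_D t by (intro sum.neutral) auto
  moreover have "{i. i \<le> p \<and> t i = t i} = {..p}" by auto
  ultimately show ?thesis using CT by simp
qed auto

lemma pairQ_ind: "d \<in> CP p k l \<Longrightarrow> pairQ p k l e c (ind d) = pairing p e c d"
proof -
  assume d: "d \<in> CP p k l"
  have "pairQ p k l e c (ind d) = (\<Sum>c'\<in>CP p k l. if c' = d then pairing p e c c' else 0)"
    unfolding pairQ_def ind_def by (intro sum.cong) auto
  also have "\<dots> = pairing p e c d" using d finite_CP by (simp add: sum.delta')
  finally show ?thesis .
qed

lemma pairQ_comb: "pairQ p k l e c (\<lambda>x. \<alpha> x + a * u x) = pairQ p k l e c \<alpha> + a * pairQ p k l e c u"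
  by (simp add: pairQ_def algebra_simps sum.distrib sum_distrib_left)

lemma Q_prs: "prs (reflQ p k l e) (\<lambda>c \<alpha>. - pairQ p k l e c \<alpha>) ind (\<lambda>\<alpha> a u. \<lambda>x. \<alpha> x + a * u x)
   (pairing p e) (CP p k l)"
proof
  fix c x assume "c \<in> CP p k l"
  show "reflQ p k l e c x = (\<lambda>d. x d + - pairQ p k l e c x * ind c d)"
    by (simp add: reflQ_def ind_def fun_eq_iff)
next
  fix c d x a assume cd: "c \<in> CP p k l" "d \<in> CP p k l"
  show "- pairQ p k l e d (\<lambda>xa. x xa + a * ind c xa) = - pairQ p k l e d x - a * pairing p e c d"
    using cd by (simp add: pairQ_comb pairQ_ind pairing_sym)
qed (auto simp: algebra_simps pairing_diag pairing_sym)

lemma V_CT_sum: assumes t: "t \<in> TP p k" and t': "t' \<in> TP p k"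
  shows "(\<Sum>i\<le>p. Vv p k l e (CT t) i (t' i) 1 :: 'k::field) = of_int (pairing p e (CT t) (CT t'))"
proof -
  define g where "g i = (if i = 0 then 1 else -1) - int (e i (t i) (t' i)) + (if t i = t' i then 1 else 0)" for i
  have V: "Vv p k l e (CT t) i (t' i) 1 = (of_int (g i) :: 'k)" if i: "i \<le> p" for i
  proof -
    have vi: "vidx p k l i (t' i) 1" using TP_D[OF t' i] l_pos[OF i TP_D[OF t' i]] i
      by (auto simp: vidx_def)
    have es: "e i (t' i) (t i) = e i (t i) (t' i)" using e_sym[OF i TP_D[OF t' i] TP_D[OF t i]] .
    have ed: "t i = t' i \<Longrightarrow> e i (t i) (t' i) = 0" using e_diag[OF i TP_D[OF t i]] by simp
    show ?thesis using vi es ed by (auto simp: g_def)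
  qed
  have "(\<Sum>i\<le>p. Vv p k l e (CT t) i (t' i) 1 :: 'k) = (\<Sum>i\<le>p. of_int (g i))"
    using V by (intro sum.cong) auto
  also have "\<dots> = of_int (\<Sum>i\<le>p. g i)" by simp
  also have "(\<Sum>i\<le>p. g i) = (1 - int p) - (\<Sum>i\<le>p. int (e i (t i) (t' i))) + int (card {i. i \<le> p \<and> t i = t' i})"
    by (simp add: g_def sum.distrib sum_subtractf sum_alt_sign sum_ind_card)
  finally show ?thesis by simp
qed


lemma Lam_step: assumes c: "c \<in> CP p k l" and d: "d \<in> CP p k l"
  shows "Lam p d (\<lambda>i j s. \<nu> i j s + a * Vv p k l e c i j s) = Lam p d \<nu> - a * of_int (pairing p e c d)"
proof (cases d)
  case (CT t')
  have t': "t' \<in> TP p k" using d CT by (simp add: CT_in_CP)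
  have S: "(\<Sum>i\<le>p. Vv p k l e c i (t' i) 1 :: 'a) = of_int (pairing p e c (CT t'))"
  proof (cases c)
    case (CT t)
    then show ?thesis using V_CT_sum[OF _ t'] c by (simp add: CT_in_CP)
  next
    case (CR i j s)
    have ij: "i \<le> p" "1 \<le> s" using c CR by (auto simp: CR_in_CP)
    have "(\<Sum>i'\<le>p. Vv p k l e c i' (t' i') 1 :: 'a) = (\<Sum>i'\<le>p. if i' = i then (if t' i = j \<and> s = 1 then -1 else 0) else 0)"
      using ij CR by (intro sum.cong) auto
    also have "\<dots> = (if t' i = j \<and> s = 1 then -1 else 0)" using ij by (simp add: sum.delta)
    finally show ?thesis using CR by simp
  qed
  have "Lam p d (\<lambda>i j s. \<nu> i j s + a * Vv p k l e c i j s) = 1 - (nu_t p \<nu> t' + a * (\<Sum>i\<le>p. Vv p k l e c i (t' i) 1))"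
    using CT by (simp add: nu_t_def sum.distrib sum_distrib_left)
  then show ?thesis using S CT by (simp add: algebra_simps)
next
  case (CR i' j' s')
  have d': "i' \<le> p" "1 \<le> j'" "j' \<le> k i'" "1 \<le> s'" "s' \<le> l i' j' - 1" using d CR by (auto simp: CR_in_CP)
  have D: "Vv p k l e c i' j' s' - Vv p k l e c i' j' (s' + 1) = - (of_int (pairing p e c d) :: 'a)"
  proof (cases c)
    case (CT t)
    have t: "t \<in> TP p k" using c CT by (simp add: CT_in_CP)
    have v1: "vidx p k l i' j' s'" "vidx p k l i' j' (s'+1)" using d' by (auto simp: vidx_def)
    have ed: "e i' (t i') (t i') = 0" using e_diag[OF d'(1) TP_D[OF t d'(1)]] .
    show ?thesis
    proof (cases "i' = 0")
      case True
      then show ?thesis using v1 ed CT CR d'(4) by auto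
    next
      case False
      then show ?thesis using v1 ed CT CR d'(4) by auto
    qed
  next
    case CR2: (CR i j s)
    show ?thesis using CR CR2 by auto
  qed
  have "Lam p d (\<lambda>i j s. \<nu> i j s + a * Vv p k l e c i j s) = Lam p d \<nu> + a * (Vv p k l e c i' j' s' - Vv p k l e c i' j' (s' + 1))"
    using CR by (simp add: algebra_simps)
  then show ?thesis using D by simp
qed

lemma R_prs: "prs (actR p k l e) (Lam p) (Vv p k l e :: gen \<Rightarrow> (nat \<Rightarrow> nat \<Rightarrow> nat \<Rightarrow> 'k::field))
   (\<lambda>\<nu> a u. \<lambda>i j s. \<nu> i j s + a * u i j s)
   (\<lambda>c d. of_int (pairing p e c d)) (CP p k l)"
proof
  fix c x assume "c \<in> CP p k l"
  show "actR p k l e c x = (\<lambda>i j s. x i j s + Lam p c x * Vv p k l e c i j s)" by (rule actR_decomp)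
next
  fix c d x a assume cd: "c \<in> CP p k l" "d \<in> CP p k l"
  show "Lam p d (\<lambda>i j s. x i j s + a * Vv p k l e c i j s) = Lam p d x - a * of_int (pairing p e c d)"
    using Lam_step[OF cd] .
qed (auto simp: algebra_simps pairing_diag pairing_sym)

end



context PD begin

lemma ind_QP: "c \<in> CP p k l \<Longrightarrow> ind c \<in> QP p k l"
  by (auto simp: QP_def ind_def)

lemma reflQ_QP: "c \<in> CP p k l \<Longrightarrow> \<alpha> \<in> QP p k l \<Longrightarrow> reflQ p k l e c \<alpha> \<in> QP p k l"
  by (auto simp: QP_def reflQ_def)

lemma Qw_QP: "ws \<in> lists (CP p k l) \<Longrightarrow> \<alpha> \<in> QP p k l \<Longrightarrow> Qw p k l e ws \<alpha> \<in> QP p k l"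
  by (induction ws) (auto simp: reflQ_QP)

lemma actR_RP: assumes c: "c \<in> CP p k l" and nu: "\<nu> \<in> RP p k l"
  shows "actR p k l e c \<nu> \<in> RP p k l"
proof -
  have "Vv p k l e c i j s = (0::'a)" if "\<not> vidx p k l i j s" for i j s
  proof (cases c)
    case (CR i0 j0 s0)
    then have "i0 \<le> p" "1 \<le> j0" "j0 \<le> k i0" "1 \<le> s0" "s0 \<le> l i0 j0 - 1" using c by (auto simp: CR_in_CP)
    then show ?thesis using that CR by (auto simp: vidx_def)
  qed (use that in auto)
  then show ?thesis using nu unfolding RP_def by (auto simp: actR_decomp)
qed

lemma Rw_RP: "ws \<in> lists (CP p k l) \<Longrightarrow> \<nu> \<in> RP p k l \<Longrightarrow> Rw p k l e ws \<nu> \<in> RP p k l"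
  by (induction ws) (auto simp: actR_RP)

lemma reflQ_invol: "c \<in> CP p k l \<Longrightarrow> reflQ p k l e c (reflQ p k l e c \<alpha>) = \<alpha>"
  using prs.invol[OF Q_prs] .

lemma actR_invol: "c \<in> CP p k l \<Longrightarrow> actR p k l e c (actR p k l e c \<nu>) = (\<nu> :: nat \<Rightarrow> nat \<Rightarrow> nat \<Rightarrow> 'a::field)"
  using prs.invol[OF R_prs] .

lemma Qw_rev: "ws \<in> lists (CP p k l) \<Longrightarrow> Qw p k l e (rev ws) (Qw p k l e ws \<alpha>) = \<alpha>"
  by (induction ws arbitrary: \<alpha>) (auto simp: reflQ_invol)

lemma Rw_rev: "ws \<in> lists (CP p k l) \<Longrightarrow> Rw p k l e (rev ws) (Rw p k l e ws \<nu>) = (\<nu> :: nat \<Rightarrow> nat \<Rightarrow> nat \<Rightarrow> 'a::field)"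
  by (induction ws arbitrary: \<nu>) (auto simp: actR_invol)

lemma Qw_rev2: "ws \<in> lists (CP p k l) \<Longrightarrow> Qw p k l e ws (Qw p k l e (rev ws) \<alpha>) = \<alpha>"
  using Qw_rev[of "rev ws" \<alpha>] by (simp add: in_lists_conv_set)

lemma Rw_rev2: "ws \<in> lists (CP p k l) \<Longrightarrow> Rw p k l e ws (Rw p k l e (rev ws) \<nu>) = (\<nu> :: nat \<Rightarrow> nat \<Rightarrow> nat \<Rightarrow> 'a::field)"
  using Rw_rev[of "rev ws" \<nu>] by (simp add: in_lists_conv_set)

section \<open>Parity via determinants\<close>

lemma QP_decomp: "\<alpha> \<in> QP p k l \<Longrightarrow> (\<Sum>d\<in>CP p k l. \<alpha> d * ind d x) = \<alpha> x"
proof -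
  assume a: "\<alpha> \<in> QP p k l"
  have "(\<Sum>d\<in>CP p k l. \<alpha> d * ind d x) = (\<Sum>d\<in>CP p k l. if d = x then \<alpha> x else 0)"
    by (intro sum.cong) (auto simp: ind_def)
  also have "\<dots> = \<alpha> x" using a finite_CP by (auto simp: sum.delta' QP_def)
  finally show ?thesis .
qed

lemma reflQ_lin: "\<alpha> \<in> QP p k l \<Longrightarrow> reflQ p k l e c \<alpha> x = (\<Sum>d\<in>CP p k l. \<alpha> d * reflQ p k l e c (ind d) x)"
proof -
  assume a: "\<alpha> \<in> QP p k l"
  have "(\<Sum>d\<in>CP p k l. \<alpha> d * reflQ p k l e c (ind d) x)
     = (\<Sum>d\<in>CP p k l. \<alpha> d * ind d x) - (\<Sum>d\<in>CP p k l. \<alpha> d * pairing p e c d) * (if x = c then 1 else 0)"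
    by (simp add: reflQ_def pairQ_ind sum_subtractf algebra_simps sum_distrib_right)
  also have "\<dots> = reflQ p k l e c \<alpha> x"
    using QP_decomp[OF a] by (simp add: reflQ_def pairQ_def)
  finally show ?thesis by simp
qed

end

locale PDL = PD +
  fixes cs :: "gen list"
  assumes cs_dist: "distinct cs" and cs_set: "set cs = CP p k l"
begin

abbreviation "N \<equiv> length cs"

definition MQ :: "((gen \<Rightarrow> int) \<Rightarrow> (gen \<Rightarrow> int)) \<Rightarrow> int mat" where
  "MQ F = Matrix.mat N N (\<lambda>(a,b). F (ind (cs ! b)) (cs ! a))"

lemma MQ_carrier: "MQ F \<in> carrier_mat N N" by (simp add: MQ_def)

lemma MQ_id: "MQ id = 1\<^sub>m N"
  by (rule eq_matI) (auto simp: MQ_def ind_def nth_eq_iff_index_eq[OF cs_dist])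

lemma cs_nth: "i < N \<Longrightarrow> cs ! i \<in> CP p k l" using cs_set nth_mem by blast

lemma MQ_mult: assumes c: "c \<in> CP p k l" and G: "\<And>b. b < N \<Longrightarrow> G (ind (cs ! b)) \<in> QP p k l"
  shows "MQ (reflQ p k l e c \<circ> G) = MQ (reflQ p k l e c) * MQ G"
proof (rule eq_matI)
  fix a b assume ab: "a < dim_row (MQ (reflQ p k l e c) * MQ G)" "b < dim_col (MQ (reflQ p k l e c) * MQ G)"
  then have ab: "a < N" "b < N" by (auto simp: MQ_def)
  have bij: "bij_betw ((!) cs) {0..<N} (CP p k l)"
    using bij_betw_nth[OF cs_dist] cs_set by (simp add: atLeast0LessThan)
  have "(MQ (reflQ p k l e c) * MQ G) $$ (a,b) = (\<Sum>i\<in>{0..<N}. reflQ p k l e c (ind (cs ! i)) (cs ! a) * G (ind (cs ! b)) (cs ! i))"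
    using ab by (simp add: MQ_def scalar_prod_def)
  also have "\<dots> = (\<Sum>d\<in>CP p k l. reflQ p k l e c (ind d) (cs ! a) * G (ind (cs ! b)) d)"
    using sum.reindex_bij_betw[OF bij, of "\<lambda>d. reflQ p k l e c (ind d) (cs ! a) * G (ind (cs ! b)) d"] by simp
  also have "\<dots> = reflQ p k l e c (G (ind (cs ! b))) (cs ! a)"
    using reflQ_lin[OF G[OF ab(2)]] by (simp add: mult.commute)
  finally show "MQ (reflQ p k l e c \<circ> G) $$ (a, b) = (MQ (reflQ p k l e c) * MQ G) $$ (a, b)"
    using ab by (simp add: MQ_def)
qed (auto simp: MQ_def)

lemma det_MQ_refl: assumes c: "c \<in> CP p k l"
  shows "Determinant.det (MQ (reflQ p k l e c)) = -1"
proof -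
  obtain ic where ic: "ic < N" "cs ! ic = c" using c cs_set by (metis in_set_conv_nth)
  let ?A = "MQ (reflQ p k l e c)"
  have ent: "?A $$ (a,b) = (if a = b then 1 else 0) - (if a = ic then pairing p e c (cs ! b) else 0)"
    if "a < N" "b < N" for a b
  proof -
    have "?A $$ (a,b) = ind (cs ! b) (cs ! a) - pairing p e c (cs ! b) * (if cs ! a = c then 1 else 0)"
      using that by (simp add: MQ_def reflQ_def pairQ_ind cs_nth)
    moreover have "ind (cs ! b) (cs ! a) = (if a = b then 1 else 0)"
      using that by (simp add: ind_def nth_eq_iff_index_eq[OF cs_dist])
    moreover have "(cs ! a = c) = (a = ic)"
      using that ic by (metis nth_eq_iff_index_eq[OF cs_dist])
    ultimately show ?thesis by auto
  qed
  let ?U = "{0..<N}"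
  let ?PU = "{q. q permutes ?U}"
  let ?pp = "\<lambda>q. signof q * (\<Prod>i = 0..<N. ?A $$ (i, q i))"
  have fPU: "finite ?PU" by (rule finite_permutations) simp
  have p0: "?pp q = 0" if q: "q \<in> ?PU - {id}" for q
  proof -
    from q have qU: "q permutes ?U" and qid: "q \<noteq> id" by auto
    obtain j where j: "q j \<noteq> j" using qid by (auto simp: fun_eq_iff)
    have jU: "j \<in> ?U" using j qU by (meson permutes_not_in)
    have "\<exists>i\<in>?U. i \<noteq> ic \<and> q i \<noteq> i"
    proof (cases "j = ic")
      case False then show ?thesis using j jU by blast
    next
      case True
      let ?j = "q ic"
      have "?j \<in> ?U" using qU jU True by (simp add: permutes_in_image)
      moreover have "?j \<noteq> ic" using j True by simp
      moreover have "q ?j \<noteq> ?j" using j True by (metis permutes_inj[OF qU] injD)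
      ultimately show ?thesis by blast
    qed
    then obtain i where i: "i \<in> ?U" "i \<noteq> ic" "q i \<noteq> i" by blast
    have "q i \<in> ?U" using qU i by (simp add: permutes_in_image)
    then have "?A $$ (i, q i) = 0" using i ent by auto
    then have "(\<Prod>i = 0..<N. ?A $$ (i, q i)) = 0" using i(1) by (intro prod_zero) auto
    then show ?thesis by simp
  qed
  have "Determinant.det ?A = (\<Sum>q\<in>?PU. ?pp q)" by (rule det_def'[OF MQ_carrier])
  also have "\<dots> = ?pp id + (\<Sum>q\<in>?PU - {id}. ?pp q)"
    by (rule sum.remove, insert fPU, auto simp: permutes_id)
  also have "(\<Sum>q\<in>?PU - {id}. ?pp q) = 0" by (rule sum.neutral) (use p0 in blast)
  also have "(\<Prod>i = 0..<N. ?A $$ (i, id i)) = (\<Prod>i = 0..<N. if i = ic then -1 else 1)"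
    using ent pairing_diag[OF c] ic by (intro prod.cong) auto
  also have "\<dots> = -1" using ic by simp
  finally show ?thesis by (simp add: sign_id)
qed

lemma det_MQ_Qw: "ws \<in> lists (CP p k l) \<Longrightarrow> Determinant.det (MQ (Qw p k l e ws)) = (-1) ^ length ws"
proof (induction ws)
  case Nil then show ?case using MQ_id by (simp add: id_def)
next
  case (Cons c ws)
  have M: "MQ (reflQ p k l e c \<circ> Qw p k l e ws) = MQ (reflQ p k l e c) * MQ (Qw p k l e ws)"
    using Cons.prems by (intro MQ_mult) (auto intro!: Qw_QP ind_QP cs_nth)
  have "Determinant.det (MQ (Qw p k l e (c # ws))) = Determinant.det (MQ (reflQ p k l e c) * MQ (Qw p k l e ws))"
    using M by (simp only: Qw_simps)
  also have "\<dots> = Determinant.det (MQ (reflQ p k l e c)) * Determinant.det (MQ (Qw p k l e ws))"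
    by (rule det_mult[OF MQ_carrier MQ_carrier])
  also have "\<dots> = -1 * (-1) ^ length ws" using Cons det_MQ_refl by simp
  finally show ?case by (simp add: comp_def)
qed

lemma parity: assumes "ws \<in> lists (CP p k l)" "us \<in> lists (CP p k l)"
  and "\<forall>\<alpha>\<in>QP p k l. Qw p k l e ws \<alpha> = Qw p k l e us \<alpha>"
  shows "even (length ws) = even (length us)"
proof -
  have "MQ (Qw p k l e ws) = MQ (Qw p k l e us)"
    unfolding MQ_def using assms(3) ind_QP cs_nth by (intro eq_matI) auto
  then have "(-1::int) ^ length ws = (-1) ^ length us" using det_MQ_Qw assms by metis
  then show ?thesis by (metis neg_one_even_power neg_one_odd_power one_neq_neg_one)
qed

end



fun alt :: "gen \<Rightarrow> gen \<Rightarrow> nat \<Rightarrow> gen list" where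
  "alt s t 0 = []"
| "alt s t (Suc n) = (if even n then t else s) # alt s t n"

lemma alt_snoc: "alt s t (Suc n) = alt t s n @ [t]"
  by (induction n arbitrary: s t) auto

lemma alt_len[simp]: "length (alt s t n) = n"
  by (induction n) auto

fun aa :: "int \<Rightarrow> nat \<Rightarrow> int" where
  "aa c 0 = 0"
| "aa c (Suc 0) = 1"
| "aa c (Suc (Suc n)) = c * aa c (Suc n) - aa c n"

lemma aa_mono: "2 \<le> c \<Longrightarrow> 0 \<le> aa c n \<and> aa c n \<le> aa c (Suc n)"
proof (induction n rule: nat_less_induct)
  case (1 n)
  show ?case
  proof (cases n)
    case 0 then show ?thesis by simp
  next
    case (Suc m)
    then have ih: "0 \<le> aa c m \<and> aa c m \<le> aa c (Suc m)" using 1 by auto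
    have "aa c (Suc (Suc m)) = c * aa c (Suc m) - aa c m" by simp
    moreover have "c * aa c (Suc m) \<ge> 2 * aa c (Suc m)" using 1(2) ih by (intro mult_right_mono) auto
    ultimately show ?thesis using Suc ih by auto
  qed
qed

context PD begin

lemma parity_PD: assumes "ws \<in> lists (CP p k l)" "us \<in> lists (CP p k l)"
  and "\<forall>\<alpha>\<in>QP p k l. Qw p k l e ws \<alpha> = Qw p k l e us \<alpha>"
  shows "even (length ws) = even (length us)"
proof -
  obtain cs where cs: "distinct cs" "set cs = CP p k l" using finite_distinct_list[OF finite_CP] by metis
  interpret L: PDL p k l e cs by (unfold_locales) (use valid cs in auto)
  show ?thesis by (rule L.parity[OF assms])
qed

lemma pairing_nonpos: assumes c: "c \<in> CP p k l" and d: "d \<in> CP p k l" and cd: "c \<noteq> d"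
  shows "pairing p e c d \<le> 0"
proof (cases c; cases d)
  fix t t' assume ct: "c = CT t" "d = CT t'"
  then have t: "t \<in> TP p k" "t' \<in> TP p k" using c d by (auto simp: CT_in_CP)
  have "\<exists>i\<le>p. t i \<noteq> t' i"
  proof (rule ccontr)
    assume "\<not> ?thesis"
    then have "t = t'" using t by (auto simp: TP_def fun_eq_iff) (metis not_le)
    then show False using cd ct by simp
  qed
  then obtain i0 where i0: "i0 \<le> p" "t i0 \<noteq> t' i0" by blast
  define D where "D = (\<Sum>i\<le>p. (if t i = t' i then 0 else 1 :: int))"
  have D1: "D \<ge> 1"
  proof -
    have "(if t i0 = t' i0 then 0 else 1 :: int) \<le> D" unfolding D_def
      using i0 by (intro member_le_sum) auto
    then show ?thesis using i0 by simp
  qed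
  have eD: "(\<Sum>i\<le>p. int (e i (t i) (t' i))) \<ge> D" unfolding D_def
  proof (intro sum_mono)
    fix i assume "i \<in> {..p}"
    then have i: "i \<le> p" by simp
    show "(if t i = t' i then 0 else 1) \<le> int (e i (t i) (t' i))"
      using valid TP_D[OF t(1) i] TP_D[OF t(2) i] i unfolding valid_data_def by auto
  qed
  have "(\<Sum>i\<le>p. (if t i = t' i then 1 else 0 :: int)) + D = (\<Sum>i\<le>p. (1::int))"
    unfolding D_def sum.distrib[symmetric] by (intro sum.cong) auto
  then have "int (card {i. i \<le> p \<and> t i = t' i}) = int p + 1 - D" by (simp add: sum_ind_card)
  then show ?thesis using ct eD D1 by simp
qed (use cd in auto)

lemma pairQ_comb2: "pairQ p k l e c (\<lambda>d. a * \<alpha> d + b * \<beta> d) = a * pairQ p k l e c \<alpha> + b * pairQ p k l e c \<beta>"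
  by (simp add: pairQ_def algebra_simps sum.distrib sum_distrib_left)

lemma reflQ_comb: "reflQ p k l e c (\<lambda>d. a * \<alpha> d + b * \<beta> d) = (\<lambda>x. a * reflQ p k l e c \<alpha> x + b * reflQ p k l e c \<beta> x)"
proof -
  have "pairQ p k l e c (\<lambda>d. a * \<alpha> d + b * \<beta> d) = a * pairQ p k l e c \<alpha> + b * pairQ p k l e c \<beta>"
    by (simp add: pairQ_def algebra_simps sum.distrib sum_distrib_left)
  then show ?thesis by (simp add: reflQ_def fun_eq_iff algebra_simps)
qed

lemma Qw_comb: "Qw p k l e ws (\<lambda>d. a * \<alpha> d + b * \<beta> d) = (\<lambda>x. a * Qw p k l e ws \<alpha> x + b * Qw p k l e ws \<beta> x)"
  by (induction ws) (simp_all add: reflQ_comb)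

lemma refl_two_s: assumes s: "s \<in> CP p k l" and t: "t \<in> CP p k l"
  shows "reflQ p k l e s (\<lambda>d. a * ind s d + b * ind t d) = (\<lambda>d. (- a - b * pairing p e s t) * ind s d + b * ind t d)"
proof -
  have "pairQ p k l e s (\<lambda>d. a * ind s d + b * ind t d) = a * 2 + b * pairing p e s t"
    using s t by (simp add: pairQ_comb2 pairQ_ind pairing_diag)
  then show ?thesis by (simp add: reflQ_def fun_eq_iff algebra_simps ind_def)
qed

lemma refl_two_t: assumes s: "s \<in> CP p k l" and t: "t \<in> CP p k l"
  shows "reflQ p k l e t (\<lambda>d. a * ind s d + b * ind t d) = (\<lambda>d. a * ind s d + (- b - a * pairing p e s t) * ind t d)"
proof -
  have "pairQ p k l e t (\<lambda>d. a * ind s d + b * ind t d) = a * pairing p e s t + b * 2"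
    using s t by (simp add: pairQ_comb2 pairQ_ind pairing_diag pairing_sym)
  then show ?thesis by (simp add: reflQ_def fun_eq_iff algebra_simps ind_def)
qed

lemma alt_formula: assumes s: "s \<in> CP p k l" and t: "t \<in> CP p k l" and c: "pairing p e s t = - c"
  shows "Qw p k l e (alt s t n) (ind s) = (if even n then (\<lambda>d. aa c (n+1) * ind s d + aa c n * ind t d)
      else (\<lambda>d. aa c n * ind s d + aa c (n+1) * ind t d))"
proof (induction n)
  case 0
  then show ?case by (simp add: fun_eq_iff ind_def)
next
  case (Suc n)
  show ?case
  proof (cases "even n")
    case True
    have "Qw p k l e (alt s t (Suc n)) (ind s) = reflQ p k l e t (Qw p k l e (alt s t n) (ind s))"
      using True by simp
    also have "\<dots> = reflQ p k l e t (\<lambda>d. aa c (n+1) * ind s d + aa c n * ind t d)"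
      using Suc.IH True by simp
    also have "\<dots> = (\<lambda>d. aa c (n+1) * ind s d + (- aa c n - aa c (n+1) * pairing p e s t) * ind t d)"
      by (rule refl_two_t[OF s t])
    also have "\<dots> = (\<lambda>d. aa c (Suc n) * ind s d + aa c (Suc n + 1) * ind t d)"
      using c by (simp add: algebra_simps)
    finally show ?thesis using True by simp
  next
    case False
    have "Qw p k l e (alt s t (Suc n)) (ind s) = reflQ p k l e s (Qw p k l e (alt s t n) (ind s))"
      using False by simp
    also have "\<dots> = reflQ p k l e s (\<lambda>d. aa c n * ind s d + aa c (n+1) * ind t d)"
      using Suc.IH False by simp
    also have "\<dots> = (\<lambda>d. (- aa c n - aa c (n+1) * pairing p e s t) * ind s d + aa c (n+1) * ind t d)"
      by (rule refl_two_s[OF s t])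
    also have "\<dots> = (\<lambda>d. aa c (Suc n + 1) * ind s d + aa c (Suc n) * ind t d)"
      using c by (simp add: algebra_simps)
    finally show ?thesis using False by simp
  qed
qed

end



locale PDK = PD +
  fixes ty :: "'k::field itself"
begin

abbreviation "CPs \<equiv> CP p k l"

definition eqv :: "gen list \<Rightarrow> gen list \<Rightarrow> bool" where
  "eqv ws us \<longleftrightarrow> (\<forall>\<alpha>\<in>QP p k l. Qw p k l e ws \<alpha> = Qw p k l e us \<alpha>) \<and>
     (\<forall>\<nu>\<in>(RP p k l :: (nat \<Rightarrow> nat \<Rightarrow> nat \<Rightarrow> 'k) set). Rw p k l e ws \<nu> = Rw p k l e us \<nu>)"

lemma eqv_refl[simp]: "eqv w w" by (simp add: eqv_def)
lemma eqv_sym: "eqv a b \<Longrightarrow> eqv b a" by (simp add: eqv_def)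
lemma eqv_trans: "eqv a b \<Longrightarrow> eqv b c \<Longrightarrow> eqv a c" by (simp add: eqv_def)

lemma eqv_app_r: "eqv a b \<Longrightarrow> c \<in> lists CPs \<Longrightarrow> eqv (a @ c) (b @ c)"
  by (simp add: eqv_def Qw_QP Rw_RP)

lemma eqv_app_l: "eqv a b \<Longrightarrow> eqv (c @ a) (c @ b)"
  by (simp add: eqv_def)

lemma eqv_Cons: "eqv a b \<Longrightarrow> eqv (x # a) (x # b)"
  using eqv_app_l[of a b "[x]"] by simp

lemma eqv_ss: "s \<in> CPs \<Longrightarrow> eqv [s, s] []"
  by (simp add: eqv_def reflQ_invol actR_invol)

lemma eqv_comm: assumes "s \<in> CPs" "t \<in> CPs" "pairing p e s t = 0" shows "eqv [s, t] [t, s]"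
proof -
  have Q: "reflQ p k l e s (reflQ p k l e t \<alpha>) = reflQ p k l e t (reflQ p k l e s \<alpha>)" for \<alpha>
    using prs.commute[OF Q_prs assms] .
  have R: "actR p k l e s (actR p k l e t \<nu>) = actR p k l e t (actR p k l e s \<nu>)" for \<nu> :: "nat \<Rightarrow> nat \<Rightarrow> nat \<Rightarrow> 'k"
    by (rule prs.commute[OF R_prs assms(1,2)]) (simp add: assms(3))
  show ?thesis unfolding eqv_def using Q R by simp
qed

lemma eqv_braid: assumes "s \<in> CPs" "t \<in> CPs" "pairing p e s t = -1" shows "eqv [s, t, s] [t, s, t]"
proof -
  have Q: "reflQ p k l e s (reflQ p k l e t (reflQ p k l e s \<alpha>)) = reflQ p k l e t (reflQ p k l e s (reflQ p k l e t \<alpha>))" for \<alpha>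
    using prs.braid[OF Q_prs assms] .
  have R: "actR p k l e s (actR p k l e t (actR p k l e s \<nu>)) = actR p k l e t (actR p k l e s (actR p k l e t \<nu>))" for \<nu> :: "nat \<Rightarrow> nat \<Rightarrow> nat \<Rightarrow> 'k"
    by (rule prs.braid[OF R_prs assms(1,2)]) (simp add: assms(3))
  show ?thesis unfolding eqv_def using Q R by simp
qed

lemma eqv_parity: "eqv a b \<Longrightarrow> a \<in> lists CPs \<Longrightarrow> b \<in> lists CPs \<Longrightarrow> even (length a) = even (length b)"
  by (intro parity_PD) (simp_all add: eqv_def)

lemma eqv_cancel: "s \<in> CPs \<Longrightarrow> b \<in> lists CPs \<Longrightarrow> eqv (a @ [s, s] @ b) (a @ b)"
  using eqv_app_l[OF eqv_app_r[OF eqv_ss]] by simp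

definition red :: "gen list \<Rightarrow> bool" where
  "red w \<longleftrightarrow> w \<in> lists CPs \<and> (\<forall>u\<in>lists CPs. eqv u w \<longrightarrow> length w \<le> length u)"

lemma exists_red: assumes w: "w \<in> lists CPs" shows "\<exists>u. red u \<and> eqv u w"
proof -
  have "\<exists>u. (u \<in> lists CPs \<and> eqv u w) \<and> (\<forall>y. (y \<in> lists CPs \<and> eqv y w) \<longrightarrow> length u \<le> length y)"
    by (rule ex_has_least_nat[where k = w]) (use w in simp)
  then obtain u where u: "u \<in> lists CPs \<and> eqv u w" and min: "\<And>y. y \<in> lists CPs \<and> eqv y w \<Longrightarrow> length u \<le> length y"
    by blast
  have "red u" unfolding red_def
  proof (intro conjI ballI impI)
    show "u \<in> lists CPs" using u by simp
    fix y assume "y \<in> lists CPs" "eqv y u"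
    then show "length u \<le> length y" using min u eqv_trans by blast
  qed
  then show ?thesis using u by blast
qed

lemma red_prefix: assumes "red (w @ v)" shows "red w"
  unfolding red_def
proof (intro conjI ballI impI)
  show "w \<in> lists CPs" using assms by (simp add: red_def)
  fix u assume u: "u \<in> lists CPs" "eqv u w"
  have v: "v \<in> lists CPs" using assms by (simp add: red_def)
  have "eqv (u @ v) (w @ v)" by (rule eqv_app_r[OF u(2) v])
  moreover have "u @ v \<in> lists CPs" using u v by simp
  ultimately have "length (w @ v) \<le> length (u @ v)" using assms unfolding red_def by blast
  then show "length w \<le> length u" by simp
qed

section \<open>Rank two\<close>

lemma alt_char: assumes st: "s \<noteq> t" "s \<in> CPs" "t \<in> CPs"
  shows "u \<in> lists {s,t} \<Longrightarrow> (\<forall>u'\<in>lists {s,t}. eqv u' u \<longrightarrow> length u \<le> length u') \<Longrightarrow>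
     (u \<noteq> [] \<longrightarrow> last u = t) \<Longrightarrow> u = alt s t (length u)"
proof (induction u)
  case Nil then show ?case by simp
next
  case (Cons x u')
  have min': "\<forall>u''\<in>lists {s,t}. eqv u'' u' \<longrightarrow> length u' \<le> length u''"
  proof (intro ballI impI)
    fix u'' assume "u'' \<in> lists {s,t}" "eqv u'' u'"
    then have "x # u'' \<in> lists {s,t}" "eqv (x # u'') (x # u')" using Cons.prems(1) by (auto intro: eqv_Cons)
    then show "length u' \<le> length u''" using Cons.prems(2) by fastforce
  qed
  have last': "u' \<noteq> [] \<longrightarrow> last u' = t" using Cons.prems(3) by auto
  have IH: "u' = alt s t (length u')" using Cons.IH Cons.prems(1) min' last' by auto
  show ?case
  proof (cases u')
    case Nil
    then show ?thesis using Cons.prems(3) by simp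
  next
    case (Cons y u'')
    obtain m where m: "length u' = Suc m" using Cons by auto
    have y: "y = (if even m then t else s)" and u'': "u'' = alt s t m" using IH m Cons by auto
    have xy: "x \<noteq> y"
    proof
      assume "x = y"
      have l: "u'' \<in> lists CPs" using Cons.prems(1) Cons st by auto
      have "eqv u'' (x # u')" using eqv_cancel[of x u'' "[]"] \<open>x = y\<close> Cons l st Cons.prems(1)
        by (auto intro: eqv_sym)
      moreover have "u'' \<in> lists {s,t}" using Cons.prems(1) Cons by auto
      ultimately have "length (x # u') \<le> length u''" using Cons.prems(2) by blast
      then show False using Cons by simp
    qed
    have "x \<in> {s,t}" using Cons.prems(1) by auto
    then have "x = (if even (Suc m) then t else s)" using xy y st by auto
    then show ?thesis using IH m by simp
  qed
qed

lemma rank2: assumes st: "s \<noteq> t" "s \<in> CPs" "t \<in> CPs" and u: "u \<in> lists {s,t}"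
  and umin: "\<forall>u'\<in>lists {s,t}. eqv u' u \<longrightarrow> length u \<le> length u'"
  and ulong: "\<forall>u'\<in>lists {s,t}. eqv u' (u @ [s]) \<longrightarrow> length u < length u'"
  shows "\<exists>a b. 0 \<le> a \<and> 0 \<le> b \<and> Qw p k l e u (ind s) = (\<lambda>d. a * ind s d + b * ind t d)"
proof -
  have uC: "u \<in> lists CPs" using u st by auto
  have lastt: "u \<noteq> [] \<longrightarrow> last u = t"
  proof
    assume ne: "u \<noteq> []"
    show "last u = t"
    proof (rule ccontr)
      assume "last u \<noteq> t"
      then have ls: "last u = s" using u ne by (metis empty_iff in_listsD insert_iff last_in_set)
      obtain u0 where u0: "u = u0 @ [s]" using ne ls by (metis append_butlast_last_id)
      have "eqv u0 (u @ [s])" using eqv_cancel[of s "[]" u0] st u0 by (auto intro: eqv_sym)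
      moreover have "u0 \<in> lists {s,t}" using u u0 by auto
      ultimately have "length u < length u0" using ulong by blast
      then show False using u0 by simp
    qed
  qed
  have ua: "u = alt s t (length u)" by (rule alt_char[OF st u umin lastt])
  define n where "n = length u"
  have ua': "u = alt s t n" unfolding n_def by (rule ua)
  have pst: "pairing p e s t \<le> 0" using pairing_nonpos st by blast
  have shorter: False if "u' \<in> lists {s,t}" "eqv u' (u @ [s])" "length u' < length u" for u'
    using ulong that by fastforce
  show ?thesis
  proof (cases "pairing p e s t \<le> -2")
    case True
    define c where "c = - pairing p e s t"
    have c2: "2 \<le> c" and c': "pairing p e s t = - c" using True by (auto simp: c_def)
    have F: "Qw p k l e u (ind s) = (if even n then (\<lambda>d. aa c (n+1) * ind s d + aa c n * ind t d)
      else (\<lambda>d. aa c n * ind s d + aa c (n+1) * ind t d))"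
      using alt_formula[OF st(2,3) c', of n] ua n_def by simp
    have A: "0 \<le> aa c n" "0 \<le> aa c (n+1)" using aa_mono[OF c2, of n] by auto
    show ?thesis
    proof (cases "even n")
      case True
      then show ?thesis using F A by (intro exI[of _ "aa c (n+1)"] exI[of _ "aa c n"]) simp
    next
      case False
      then show ?thesis using F A by (intro exI[of _ "aa c n"] exI[of _ "aa c (n+1)"]) simp
    qed
  next
    case False
    then have pc: "pairing p e s t = 0 \<or> pairing p e s t = -1" using pst by auto
    have s1: "Qw p k l e [] (ind s) = (\<lambda>d. 1 * ind s d + 0 * ind t d)" by simp
    have s2: "Qw p k l e [t] (ind s) = (\<lambda>d. 1 * ind s d + (- pairing p e s t) * ind t d)"
      using refl_two_t[OF st(2,3), of 1 0] by simp
    have s3: "Qw p k l e [s, t] (ind s) = (\<lambda>d. (-1 + pairing p e s t * pairing p e s t) * ind s d + (- pairing p e s t) * ind t d)"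
    proof -
      have i: "ind s = (\<lambda>d. 1 * ind s d + 0 * ind t d)" by simp
      have "Qw p k l e [s, t] (ind s) = reflQ p k l e s (reflQ p k l e t (\<lambda>d. 1 * ind s d + 0 * ind t d))"
        by (simp only: Qw_simps comp_apply id_apply i[symmetric])
      also have "\<dots> = reflQ p k l e s (\<lambda>d. 1 * ind s d + (- 0 - 1 * pairing p e s t) * ind t d)"
        by (simp only: refl_two_t[OF st(2,3)])
      also have "\<dots> = (\<lambda>d. (- 1 - (- 0 - 1 * pairing p e s t) * pairing p e s t) * ind s d + (- 0 - 1 * pairing p e s t) * ind t d)"
        by (rule refl_two_s[OF st(2,3)])
      finally show ?thesis by simp
    qed
    show ?thesis
    proof (cases "n \<le> 1")
      case True
      then have "n = 0 \<or> n = 1" by auto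
      then show ?thesis
      proof
        assume "n = 0" then have "u = []" using n_def by simp
        then show ?thesis using s1 by (intro exI[of _ 1] exI[of _ 0]) simp
      next
        assume "n = 1" then have "u = [t]" using ua' by simp
        then show ?thesis using s2 pst by (intro exI[of _ 1] exI[of _ "- pairing p e s t"]) simp
      qed
    next
      case n2: False
      then obtain m where m: "n = Suc (Suc m)" by (cases n; cases "n - 1") auto
      have u2: "u = alt s t m @ [s, t]" unfolding ua' m by (simp only: alt_snoc append_assoc append_Cons append_Nil)
      have am: "alt s t m \<in> lists CPs" "alt s t m \<in> lists {s,t}" using u u2 st by auto
      show ?thesis
      proof (cases "pairing p e s t = 0")
        case True
        have "eqv (alt s t m @ [t]) (alt s t m @ [s, t, s])"
        proof -
          have "eqv [s,t,s] [t,s,s]" using eqv_app_r[OF eqv_comm[OF st(2,3) True], of "[s]"] st by simp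
          moreover have "eqv [t,s,s] [t]" using eqv_cancel[of s "[]" "[t]"] st by simp
          ultimately show ?thesis by (meson eqv_app_l eqv_sym eqv_trans)
        qed
        then have E: "eqv (alt s t m @ [t]) (u @ [s])" using u2 by simp
        have M: "alt s t m @ [t] \<in> lists {s,t}" using am by auto
        have lu: "length u = Suc (Suc m)" using n_def m by simp
        have "length (alt s t m @ [t]) < length u" using lu by simp
        then show ?thesis using shorter[OF M E] by blast
      next
        case False
        then have pm: "pairing p e s t = -1" using pc by simp
        show ?thesis
        proof (cases "m = 0")
          case True
          then have "u = [s, t]" using u2 by simp
          then show ?thesis using s3 pm by (intro exI[of _ 0] exI[of _ 1]) simp
        next
          case False
          then obtain m' where m': "m = Suc m'" by (cases m) auto
          have u3: "u = alt t s m' @ [t, s, t]" unfolding u2 m' by (simp only: alt_snoc append_assoc append_Cons append_Nil)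
          have am': "alt t s m' \<in> lists {s,t}" using u u3 by auto
          have "eqv (alt t s m' @ [s, t]) (alt t s m' @ [t, s, t, s])"
          proof -
            have "eqv [t,s,t,s] [s,t,s,s]"
              using eqv_app_r[OF eqv_sym[OF eqv_braid[OF st(2,3) pm]], of "[s]"] st by simp
            moreover have "eqv [s,t,s,s] [s,t]" using eqv_cancel[of s "[]" "[s,t]"] st by simp
            ultimately show ?thesis by (meson eqv_app_l eqv_sym eqv_trans)
          qed
          then have E: "eqv (alt t s m' @ [s, t]) (u @ [s])" using u3 by simp
          have M: "alt t s m' @ [s, t] \<in> lists {s,t}" using am' by auto
          have lu: "length u = Suc (Suc (Suc m'))" using n_def m m' by simp
          have "length (alt t s m' @ [s, t]) < length u" using lu by simp
          then show ?thesis using shorter[OF M E] by blast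
        qed
      qed
    qed
  qed
qed

end



context PDK begin

definition nonneg :: "(gen \<Rightarrow> int) \<Rightarrow> bool" where "nonneg x \<longleftrightarrow> (\<forall>d. 0 \<le> x d)"

lemma PT: "red w \<Longrightarrow> s \<in> CPs \<Longrightarrow> (\<forall>u\<in>lists CPs. eqv u (w @ [s]) \<longrightarrow> length w < length u)
   \<Longrightarrow> nonneg (Qw p k l e w (ind s))"
proof (induction "length w" arbitrary: w s rule: less_induct)
  case less
  note redw0 = less.prems(1) and sC = less.prems(2) and longw = less.prems(3)
  show ?case
  proof (cases w rule: rev_cases)
    case Nil then show ?thesis by (simp add: nonneg_def ind_def)
  next
    case (snoc w0 t)
    define n where "n = length w"
    have wC: "w \<in> lists CPs" using redw0 by (simp add: red_def)
    have tC: "t \<in> CPs" and w0C: "w0 \<in> lists CPs" using wC snoc by auto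
    have redw: "\<forall>u\<in>lists CPs. eqv u w \<longrightarrow> n \<le> length u" using redw0 by (simp add: red_def n_def)
    have ts: "t \<noteq> s"
    proof
      assume "t = s"
      have "eqv (w0 @ [s, s] @ []) (w0 @ [])" by (rule eqv_cancel[OF sC]) simp
      then have "eqv w0 (w @ [s])" using snoc \<open>t = s\<close> by (simp add: eqv_sym)
      then have "length w < length w0" using longw w0C by blast
      then show False using snoc by simp
    qed
    define A where "A = {(v,u). v \<in> lists CPs \<and> u \<in> lists {s,t} \<and> eqv (v @ u) w \<and> length v + length u = n}"
    have w0A: "(w0, [t]) \<in> A" using w0C snoc by (simp add: A_def n_def)
    have "\<exists>x. x \<in> A \<and> (\<forall>y. y \<in> A \<longrightarrow> length (fst x) \<le> length (fst y))"
      by (rule ex_has_least_nat[where k = "(w0, [t])"]) (rule w0A)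
    then obtain v u where vuA: "(v,u) \<in> A" and vmin: "\<And>v' u'. (v',u') \<in> A \<Longrightarrow> length v \<le> length v'"
      by fastforce
    have vC: "v \<in> lists CPs" and u: "u \<in> lists {s,t}" and E: "eqv (v @ u) w" and len: "length v + length u = n"
      using vuA by (auto simp: A_def)
    have uC: "u \<in> lists CPs" using u sC tC by auto
    have lv: "length v < n"
      using vmin[OF w0A] snoc n_def by simp
    have key: "n \<le> length v' + length u'" if "v' \<in> lists CPs" "u' \<in> lists {s,t}" "eqv (v' @ u') w" for v' u'
    proof -
      have "v' @ u' \<in> lists CPs" using that sC tC by auto
      then show ?thesis using redw that by fastforce
    qed
    have redv: "red v" unfolding red_def
    proof (intro conjI ballI impI)
      show "v \<in> lists CPs" by (rule vC)
      fix v' assume v': "v' \<in> lists CPs" "eqv v' v"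
      have "eqv (v' @ u) w" using eqv_trans[OF eqv_app_r[OF v'(2) uC] E] .
      then show "length v \<le> length v'" using key[OF v'(1) u] len by simp
    qed
    have longer: "\<forall>v'\<in>lists CPs. eqv v' (v @ [x]) \<longrightarrow> length v < length v'" if xst: "x \<in> {s,t}" for x
    proof (intro ballI impI)
      fix v' assume v': "v' \<in> lists CPs" "eqv v' (v @ [x])"
      have xC: "x \<in> CPs" using xst sC tC by auto
      show "length v < length v'"
      proof (rule ccontr)
        assume "\<not> length v < length v'"
        moreover have "even (length v') = even (length (v @ [x]))"
          by (rule eqv_parity[OF v'(2) v'(1)]) (use vC xC in simp)
        ultimately have lt: "length v' < length v"
          by (metis even_Suc length_append_singleton nat_neq_iff)
        have e1: "eqv (v' @ [x]) (v @ [x, x])" using eqv_app_r[OF v'(2), of "[x]"] xC by simp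
        have e2: "eqv (v @ [x, x]) v" using eqv_cancel[OF xC, of "[]" v] by simp
        have "eqv ((v' @ [x]) @ u) (v @ u)" by (rule eqv_app_r[OF eqv_trans[OF e1 e2] uC])
        then have e3: "eqv (v' @ (x # u)) w" using E eqv_trans by simp
        have xu: "x # u \<in> lists {s,t}" using xst u by simp
        have "n \<le> length v' + length (x # u)" by (rule key[OF v'(1) xu e3])
        then have "length v' + length (x # u) = n" using lt len by simp
        then have "(v', x # u) \<in> A" using v'(1) xu e3 by (simp add: A_def)
        then have "length v \<le> length v'" by (rule vmin)
        then show False using lt by simp
      qed
    qed
    have IHs: "nonneg (Qw p k l e v (ind x))" if "x \<in> {s,t}" for x
    proof -
      have "x \<in> CPs" using that sC tC by auto
      then show ?thesis using less.hyps[of v x] lv n_def redv longer[OF that] by simp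
    qed
    have umin: "\<forall>u'\<in>lists {s,t}. eqv u' u \<longrightarrow> length u \<le> length u'"
    proof (intro ballI impI)
      fix u' assume u': "u' \<in> lists {s,t}" "eqv u' u"
      have "eqv (v @ u') w" using eqv_trans[OF eqv_app_l[OF u'(2)] E] .
      then show "length u \<le> length u'" using key[OF vC u'(1)] len by simp
    qed
    have ulong: "\<forall>u'\<in>lists {s,t}. eqv u' (u @ [s]) \<longrightarrow> length u < length u'"
    proof (intro ballI impI)
      fix u' assume u': "u' \<in> lists {s,t}" "eqv u' (u @ [s])"
      have "eqv ((v @ u) @ [s]) (w @ [s])" using eqv_app_r[OF E, of "[s]"] sC by simp
      then have "eqv (v @ u') (w @ [s])" using eqv_trans[OF eqv_app_l[OF u'(2), of v]] by simp
      moreover have "v @ u' \<in> lists CPs" using vC u' sC tC by auto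
      ultimately have "length w < length (v @ u')" using longw by blast
      then show "length u < length u'" using len n_def by simp
    qed
    obtain a b where ab: "0 \<le> a" "0 \<le> b" and Qu: "Qw p k l e u (ind s) = (\<lambda>d. a * ind s d + b * ind t d)"
      using rank2[OF ts[symmetric] sC tC u umin ulong] by blast
    have "Qw p k l e w (ind s) = Qw p k l e (v @ u) (ind s)"
      using E ind_QP[OF sC] by (simp add: eqv_def)
    also have "\<dots> = (\<lambda>x. a * Qw p k l e v (ind s) x + b * Qw p k l e v (ind t) x)"
      using Qu Qw_comb by simp
    finally show ?thesis using IHs[of s] IHs[of t] ab by (simp add: nonneg_def)
  qed
qed

lemma faithful: assumes w: "w \<in> lists CPs" and Q: "\<forall>\<alpha>\<in>QP p k l. Qw p k l e w \<alpha> = \<alpha>"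
  shows "\<forall>\<nu>\<in>(RP p k l :: (nat \<Rightarrow> nat \<Rightarrow> nat \<Rightarrow> 'k) set). Rw p k l e w \<nu> = \<nu>"
proof (rule ccontr)
  assume "\<not> ?thesis"
  then obtain \<nu> :: "nat \<Rightarrow> nat \<Rightarrow> nat \<Rightarrow> 'k" where nu: "\<nu> \<in> RP p k l" "Rw p k l e w \<nu> \<noteq> \<nu>" by blast
  obtain u where ru: "red u" and eu: "eqv u w" using exists_red[OF w] by blast
  have uR: "Rw p k l e u \<nu> \<noteq> \<nu>" using eu nu by (simp add: eqv_def)
  have uQ: "\<forall>\<alpha>\<in>QP p k l. Qw p k l e u \<alpha> = \<alpha>" using eu Q by (simp add: eqv_def)
  show False
  proof (cases u rule: rev_cases)
    case Nil then show False using uR by simp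
  next
    case (snoc u0 s)
    have uC: "u \<in> lists CPs" using ru by (simp add: red_def)
    then have sC: "s \<in> CPs" using snoc by simp
    have r0: "red u0" using ru snoc red_prefix by blast
    have lg: "\<forall>u'\<in>lists CPs. eqv u' (u0 @ [s]) \<longrightarrow> length u0 < length u'"
      using ru snoc unfolding red_def by fastforce
    have nn: "nonneg (Qw p k l e u0 (ind s))" by (rule PT[OF r0 sC lg])
    have rs: "reflQ p k l e s (ind s) = (\<lambda>d. (-1) * ind s d + 0 * ind s d)"
      unfolding reflQ_def pairQ_ind[OF sC] pairing_diag[OF sC] by (simp add: fun_eq_iff ind_def)
    have "Qw p k l e u (ind s) = Qw p k l e u0 (reflQ p k l e s (ind s))" using snoc by simp
    also have "\<dots> = (\<lambda>x. (-1) * Qw p k l e u0 (ind s) x + 0 * Qw p k l e u0 (ind s) x)"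
      unfolding rs by (rule Qw_comb)
    finally have "Qw p k l e u (ind s) s = - Qw p k l e u0 (ind s) s" by simp
    moreover have "Qw p k l e u (ind s) = ind s" using uQ ind_QP[OF sC] by simp
    ultimately show False using nn by (simp add: nonneg_def ind_def) (metis neg_0_le_iff_le not_one_le_zero)
  qed
qed

end

theorem mainTheorem9:
  fixes p :: nat and k :: "nat \<Rightarrow> nat" and l :: "nat \<Rightarrow> nat \<Rightarrow> nat"
    and e :: "nat \<Rightarrow> nat \<Rightarrow> nat \<Rightarrow> nat"
  assumes "valid_data p k l e"
  shows "\<exists>\<rho> :: ((gen \<Rightarrow> int) \<Rightarrow> (gen \<Rightarrow> int)) \<Rightarrow> ((nat \<Rightarrow> nat \<Rightarrow> nat \<Rightarrow> 'k::field_char_0) \<Rightarrow> (nat \<Rightarrow> nat \<Rightarrow> nat \<Rightarrow> 'k)).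
           \<forall>ws \<in> lists (CP p k l). \<rho> (wordQ p k l e ws) = wordR p k l e ws"
proof -
  interpret PDK p k l e "TYPE('k)" by unfold_locales (rule assms)
  define \<rho> :: "((gen \<Rightarrow> int) \<Rightarrow> (gen \<Rightarrow> int)) \<Rightarrow> ((nat \<Rightarrow> nat \<Rightarrow> nat \<Rightarrow> 'k) \<Rightarrow> (nat \<Rightarrow> nat \<Rightarrow> nat \<Rightarrow> 'k))"
    where "\<rho> F = wordR p k l e (SOME us. us \<in> lists (CP p k l) \<and> wordQ p k l e us = F)" for F
  have "\<rho> (wordQ p k l e ws) = wordR p k l e ws" if ws: "ws \<in> lists (CP p k l)" for ws
  proof -
    define us where "us = (SOME us. us \<in> lists (CP p k l) \<and> wordQ p k l e us = wordQ p k l e ws)"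
    have "us \<in> lists (CP p k l) \<and> wordQ p k l e us = wordQ p k l e ws"
      unfolding us_def by (rule someI[of _ ws]) (use ws in simp)
    then have us: "us \<in> lists (CP p k l)" and wq: "wordQ p k l e us = wordQ p k l e ws" by auto
    have qeq: "Qw p k l e us \<alpha> = Qw p k l e ws \<alpha>" if "\<alpha> \<in> QP p k l" for \<alpha>
      using fun_cong[OF wq, of \<alpha>] that by (simp add: wordQ_def Qw_def)
    have Qid: "\<forall>\<alpha>\<in>QP p k l. Qw p k l e (rev ws @ us) \<alpha> = \<alpha>"
      using qeq Qw_rev[OF ws] by simp
    have rl: "rev ws @ us \<in> lists (CP p k l)" using ws us by (auto simp: in_lists_conv_set)
    have Rid: "\<forall>\<nu>\<in>(RP p k l :: (nat \<Rightarrow> nat \<Rightarrow> nat \<Rightarrow> 'k) set). Rw p k l e (rev ws @ us) \<nu> = \<nu>"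
      by (rule faithful[OF rl Qid])
    have req: "Rw p k l e us \<nu> = Rw p k l e ws \<nu>" if "\<nu> \<in> (RP p k l :: (nat \<Rightarrow> nat \<Rightarrow> nat \<Rightarrow> 'k) set)" for \<nu>
    proof -
      have "Rw p k l e (rev ws) (Rw p k l e us \<nu>) = \<nu>" using Rid that by simp
      then have A: "Rw p k l e ws (Rw p k l e (rev ws) (Rw p k l e us \<nu>)) = Rw p k l e ws \<nu>" by simp
      have B: "Rw p k l e ws (Rw p k l e (rev ws) (Rw p k l e us \<nu>)) = Rw p k l e us \<nu>"
        by (rule Rw_rev2[OF ws])
      show ?thesis using A B by simp
    qed
    show ?thesis unfolding \<rho>_def us_def[symmetric] wordR_def
      using req by (auto simp: Rw_def[symmetric] restrict_def fun_eq_iff)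
  qed
  then show ?thesis by blast
qed


end
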